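(* Let $f_0:\mathbb{R}^n\to\mathbb{R}$ be lower semicontinuous, proper and strictly convex, let $\mathcal{Y}\subseteq\mathbb{R}^n$ be convex and compact, let $f=f_0+\delta_{\mathcal{Y}}$, and let $\mathbf{A}\in\mathbb{R}^{m\times n}$ with $m<n$ and $\operatorname{rank}\mathbf{A}=m$, and $\mathbf{b}\in\mathbb{R}^m$. Assume that for every $\bar{\mathbf{y}}\in\operatorname{bnd}\mathcal{Y}$ there exist a sequence $(\mathbf{y}_k)$ in $\mathcal{Y}$ with $\mathbf{y}_k\to\bar{\mathbf{y}}$ and subgradients $\boldsymbol{\nu}_k\in\partial f(\mathbf{y}_k)$ with $\limsup_k\|\boldsymbol{\nu}_k\|_2<\infty$. Let $\mathcal{V}=\operatorname{cl}\{\boldsymbol{\nu}\in\partial f_0(\mathbf{y}) \;|\; \mathbf{y}\in\operatorname{int}\mathcal{Y}\}$, and assume there exist $\boldsymbol{\nu}\in\mathbb{R}^n\setminus\operatorname{int}\mathcal{V}$ and $\boldsymbol{\eta}\in\mathbb{R}^n$ such that for all $\alpha\ge0$: $\boldsymbol{\nu}+\alpha\boldsymbol{\eta}\in\mathbb{R}^n\setminus\operatorname{int}\mathcal{V}$, $\nabla f^*(\boldsymbol{\nu}+\alpha\boldsymbol{\eta})$ does not depend on $\alpha$, and the ray $\{\boldsymbol{\nu}+\alpha\boldsymbol{\eta}\mid\alpha\ge0\}$ is contained in the range $R(\mathbf{A}^{\mathsf T})$ of $\mathbf{A}^{\mathsf T}$. Let $g:\mathbb{R}^m\to\mathbb{R}$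 be the dual function $$g(\boldsymbol{\lambda})=\inf_{\mathbf{y}\in\mathbb{R}^n}\big(f(\mathbf{y})-\boldsymbol{\lambda}^{\mathsf T}(\mathbf{A}\mathbf{y}-\mathbf{b})\big)=-f^*(\mathbf{A}^{\mathsf T}\boldsymbol{\lambda})+\mathbf{b}^{\mathsf T}\boldsymbol{\lambda}.$$ Then there exist $\boldsymbol{\lambda}\in\mathbb{R}^m$ and $\boldsymbol{\mu}\in\mathbb{R}^m$ such that $\nabla g(\boldsymbol{\lambda}+\alpha\boldsymbol{\mu})$ is the same vector for all $\alpha\ge0$.
   Context: $\delta_{\mathcal{Y}}$ is the indicator function of $\mathcal{Y}$; $f^*(\boldsymbol{\nu})=\sup_{\mathbf{x}\in\operatorname{dom}f}(\boldsymbol{\nu}^{\mathsf T}\mathbf{x}-f(\mathbf{x}))$ is the convex conjugate of $f$, which under these hypotheses is finite and differentiable on $\mathbb{R}^n$ (so $g$ is differentiable). $\partial$ is the convex subdifferential; $\operatorname{cl},\operatorname{int},\operatorname{bnd}$ denote closure, interior, boundary. *)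

theory Defs
  imports "HOL-Analysis.Analysis"
begin

definition lsc :: "('a::topological_space \<Rightarrow> real) \<Rightarrow> bool" where
  "lsc f \<longleftrightarrow> (\<forall>x. \<forall>t. t < f x \<longrightarrow> (\<forall>\<^sub>F y in at x. t < f y))"

definition strictly_convex_on :: "'a::real_vector set \<Rightarrow> ('a \<Rightarrow> real) \<Rightarrow> bool" where
  "strictly_convex_on S f \<longleftrightarrow> convex S \<and>
    (\<forall>x\<in>S. \<forall>y\<in>S. x \<noteq> y \<longrightarrow> (\<forall>u. 0 < u \<and> u < 1 \<longrightarrow>
       f (u *\<^sub>R x + (1 - u) *\<^sub>R y) < u * f x + (1 - u) * f y))"

definition subdiff :: "('a::real_inner \<Rightarrow> real) \<Rightarrow> 'a \<Rightarrow> 'a set" where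
  "subdiff f y = {\<nu>. \<forall>x. f y + \<nu> \<bullet> (x - y) \<le> f x}"

text \<open>Subdifferential of f = f0 + indicator(Y) at a point y (empty outside Y).\<close>
definition subdiff_ind :: "('a::real_inner \<Rightarrow> real) \<Rightarrow> 'a set \<Rightarrow> 'a \<Rightarrow> 'a set" where
  "subdiff_ind f0 Y y = (if y \<in> Y then {\<nu>. \<forall>x\<in>Y. f0 y + \<nu> \<bullet> (x - y) \<le> f0 x} else {})"

text \<open>Convex conjugate of f = f0 + indicator(Y): sup over dom f = Y.\<close>
definition conj_ind :: "('a::real_inner \<Rightarrow> real) \<Rightarrow> 'a set \<Rightarrow> 'a \<Rightarrow> real" where
  "conj_ind f0 Y \<nu> = (SUP x\<in>Y. \<nu> \<bullet> x - f0 x)"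

definition dual_fun :: "(real^'n \<Rightarrow> real) \<Rightarrow> (real^'n) set \<Rightarrow> real^'n^'m \<Rightarrow> real^'m \<Rightarrow> real^'m \<Rightarrow> real" where
  "dual_fun f0 Y A b l = (INF y\<in>Y. f0 y - l \<bullet> (A *v y - b))"

end

theory Submission
  imports Defs
begin

lemma dual_eq:
  fixes f0 :: "real^'n \<Rightarrow> real" and A :: "real^'n^'m"
  assumes cont: "continuous_on UNIV f0" and Yc: "compact Y" and Yne: "Y \<noteq> {}"
  shows "dual_fun f0 Y A b l = l \<bullet> b - conj_ind f0 Y (transpose A *v l)"
proof -
  let ?h = "\<lambda>y. (transpose A *v l) \<bullet> y - f0 y"
  have hc: "continuous_on Y ?h"
    by (intro continuous_intros continuous_on_subset[OF cont]) auto
  have bd: "bdd_above (?h ` Y)"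
    using compact_continuous_image[OF hc Yc] by (simp add: bounded_imp_bdd_above compact_imp_bounded)
  have eq: "\<And>y. f0 y - l \<bullet> (A *v y - b) = l \<bullet> b - ?h y"
  proof -
    fix y
    have tr: "(transpose A *v l) \<bullet> y = l \<bullet> (A *v y)"
      by (metis dot_lmul_matrix vector_transpose_matrix transpose_transpose)
    show "f0 y - l \<bullet> (A *v y - b) = l \<bullet> b - ?h y"
      by (simp add: inner_diff_right tr dot_lmul_matrix)
  qed
  have "dual_fun f0 Y A b l = (INF y\<in>Y. l \<bullet> b - ?h y)"
    unfolding dual_fun_def eq ..
  also have "\<dots> = l \<bullet> b - (SUP y\<in>Y. ?h y)"
  proof -
    have bd2: "bdd_above ((\<lambda>y. - (l \<bullet> b) + ?h y) ` Y)"
    proof -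
      from bd obtain M where "\<forall>x\<in>Y. ?h x \<le> M" by (auto simp: bdd_above_def)
      then show ?thesis by (intro bdd_aboveI[where M="M - l \<bullet> b"]) auto
    qed
    have "(INF y\<in>Y. l \<bullet> b - ?h y) = (INF y\<in>Y. - (- (l \<bullet> b) + ?h y))" by simp
    also have "\<dots> = - (SUP y\<in>Y. - (l \<bullet> b) + ?h y)"
      using uminus_cSUP[OF bd2 Yne] by simp
    also have "\<dots> = - (- (l \<bullet> b) + (SUP y\<in>Y. ?h y))"
      by (simp only: Sup_add_eq[OF bd Yne])
    finally show ?thesis by simp
  qed
  finally show ?thesis unfolding conj_ind_def .
qed


theorem corollary1:
  fixes f0 :: "real^'n \<Rightarrow> real"
    and Y :: "(real^'n) set"
    and A :: "real^'n^'m"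
    and b :: "real^'m"
  assumes f0_lsc: "lsc f0"
    and f0_strict: "strictly_convex_on UNIV f0"
    and Y_convex: "convex Y" and Y_compact: "compact Y" and Y_ne: "Y \<noteq> {}"
    and mn: "CARD('m) < CARD('n)"
    and rankA: "rank A = CARD('m)"
    and bnd: "\<forall>ybar\<in>frontier Y. \<exists>ys \<nu>s. (\<forall>k. ys k \<in> Y) \<and> ys \<longlonglongrightarrow> ybar \<and>
                 (\<forall>k. \<nu>s k \<in> subdiff_ind f0 Y (ys k)) \<and>
                 limsup (\<lambda>k. ereal (norm (\<nu>s k))) < \<infinity>"
    and ray: "\<exists>\<nu> \<eta>. \<eta> \<noteq> 0 \<and> (\<exists>d. \<forall>\<alpha>\<ge>(0::real).
                 \<nu> + \<alpha> *\<^sub>R \<eta> \<notin> interior (closure {v. \<exists>y\<in>interior Y. v \<in> subdiff f0 y}) \<and>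
                 (conj_ind f0 Y has_derivative (\<lambda>h. d \<bullet> h)) (at (\<nu> + \<alpha> *\<^sub>R \<eta>)) \<and>
                 \<nu> + \<alpha> *\<^sub>R \<eta> \<in> range (\<lambda>l. transpose A *v l))"
  shows "\<exists>l \<mu>. \<mu> \<noteq> 0 \<and> (\<exists>d. \<forall>\<alpha>\<ge>(0::real).
           (dual_fun f0 Y A b has_derivative (\<lambda>h. d \<bullet> h)) (at (l + \<alpha> *\<^sub>R \<mu>)))"
proof -
  obtain \<nu> \<eta> d where eta: "\<eta> \<noteq> 0" and H: "\<And>\<alpha>. \<alpha> \<ge> 0 \<Longrightarrow>
                 \<nu> + \<alpha> *\<^sub>R \<eta> \<notin> interior (closure {v. \<exists>y\<in>interior Y. v \<in> subdiff f0 y}) \<and>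
                 (conj_ind f0 Y has_derivative (\<lambda>h. d \<bullet> h)) (at (\<nu> + \<alpha> *\<^sub>R \<eta>)) \<and>
                 \<nu> + \<alpha> *\<^sub>R \<eta> \<in> range (\<lambda>l. transpose A *v l)"
    using ray by blast
  have cvx: "convex_on UNIV f0"
    unfolding convex_on_alt
  proof (intro conjI ballI allI impI)
    fix x y :: "real^'n" and u :: real
    assume u: "0 \<le> u \<and> u \<le> 1"
    show "f0 (u *\<^sub>R x + (1 - u) *\<^sub>R y) \<le> u * f0 x + (1 - u) * f0 y"
    proof (cases "x = y \<or> u = 0 \<or> u = 1")
      case True
      then show ?thesis
      proof (elim disjE)
        assume "x = y" then show ?thesis by (simp add: algebra_simps)
      qed auto
    next
      case False
      then show ?thesis using f0_strict u unfolding strictly_convex_on_def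
        by (smt (verit) UNIV_I)
    qed
  qed simp
  have cont: "continuous_on UNIV f0"
    by (rule convex_on_continuous[OF open_UNIV cvx])
  have "\<nu> + 0 *\<^sub>R \<eta> \<in> range (\<lambda>l. transpose A *v l)" using H[of 0] by simp
  then obtain l where l: "transpose A *v l = \<nu>" by auto
  have "\<nu> + 1 *\<^sub>R \<eta> \<in> range (\<lambda>l. transpose A *v l)" using H[of 1] by simp
  then obtain l1 where l1: "transpose A *v l1 = \<nu> + \<eta>" by auto
  define \<mu> where "\<mu> = l1 - l"
  have mu: "transpose A *v \<mu> = \<eta>"
    using l l1 by (simp add: \<mu>_def matrix_vector_mult_diff_distrib)
  have mu0: "\<mu> \<noteq> 0" using mu eta by auto
  have deq: "dual_fun f0 Y A b = (\<lambda>x. x \<bullet> b - conj_ind f0 Y (transpose A *v x))"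
    using dual_eq[OF cont Y_compact Y_ne] by blast
  have lin: "bounded_linear (\<lambda>x. transpose A *v x)"
    by (rule matrix_vector_mul_bounded_linear)
  show ?thesis
  proof (intro exI conjI allI impI)
    show "\<mu> \<noteq> 0" by (rule mu0)
    fix \<alpha> :: real assume a: "\<alpha> \<ge> 0"
    have pt: "transpose A *v (l + \<alpha> *\<^sub>R \<mu>) = \<nu> + \<alpha> *\<^sub>R \<eta>"
      by (simp only: matrix_vector_right_distrib matrix_vector_mult_scaleR l mu)
    have D: "(conj_ind f0 Y has_derivative (\<lambda>h. d \<bullet> h)) (at (transpose A *v (l + \<alpha> *\<^sub>R \<mu>)))"
      using H[OF a] pt by simp
    have D2: "((\<lambda>x. conj_ind f0 Y (transpose A *v x)) has_derivative (\<lambda>h. d \<bullet> (transpose A *v h))) (at (l + \<alpha> *\<^sub>R \<mu>))"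
      using has_derivative_compose[OF bounded_linear_imp_has_derivative[OF lin] D] by simp
    have D3: "((\<lambda>x. x \<bullet> b - conj_ind f0 Y (transpose A *v x)) has_derivative (\<lambda>h. h \<bullet> b - d \<bullet> (transpose A *v h))) (at (l + \<alpha> *\<^sub>R \<mu>))"
      by (intro derivative_intros D2)
    have E: "(\<lambda>h. h \<bullet> b - d \<bullet> (transpose A *v h)) = (\<lambda>h. (b - A *v d) \<bullet> h)"
    proof
      fix h
      have "d \<bullet> (transpose A *v h) = (A *v d) \<bullet> h"
        by (metis dot_lmul_matrix vector_transpose_matrix inner_commute)
      then show "h \<bullet> b - d \<bullet> (transpose A *v h) = (b - A *v d) \<bullet> h"
        by (simp add: inner_diff_left inner_diff_right inner_commute)
    qed
    show "(dual_fun f0 Y A b has_derivative (\<lambda>h. (b - A *v d) \<bullet> h)) (at (l + \<alpha> *\<^sub>R \<mu>))"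
      using D3 unfolding deq E .
  qed
qed

end
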